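(* Let $X$ be a real reflexive Banach space and $f:X\to\mathbb{R}\cup\{+\infty\}$ a lower semicontinuous proper convex function, and let $f^{FY}(x,x^{\ast}):=f(x)+f^{\ast}(x^{\ast})$ on $X\times X^{\ast}$. Then for every $\epsilon\ge0$ and $x\in X$, $\partial_\epsilon f(x)=\breve{T}_{f^{FY}}(\epsilon,x)$, i.e. $\partial_\epsilon f(x)=\{x^{\ast}\in X^{\ast}:(x^{\ast},x)\in\partial_{2\epsilon}f^{FY}(x,x^{\ast})\}$.
   Context: $X^{\ast}$ is the dual of $X$ with pairing $\langle\cdot,\cdot\rangle$; $f^{\ast}(x^{\ast})=\sup_x\{\langle x,x^{\ast}\rangle-f(x)\}$. For $\epsilon\ge0$, $\partial_\epsilon f(x)=\{x^{\ast}: f(y)-f(x)\ge\langle y-x,x^{\ast}\rangle-\epsilon\ \forall y\in X\}$ if $f(x)<\infty$, and $\emptyset$ otherwise. The dual of $X\times X^{\ast}$ is identified with $X^{\ast}\times X$ via $\langle (x,x^{\ast}),(y^{\ast},y)\rangle=\langle x,y^{\ast}\rangle+\langle y,x^{\ast}\rangle$; for $g:X\times X^{\ast}\to\mathbb{R}\cup\{+\infty\}$ and $\eta\ge0$, $\partial_\eta g(z)$ is the set of $(y^{\ast},y)\in X^{\ast}\times X$ with $g(w,w^{\ast})\ge g(z)+\langle (w,w^{\ast})-z,(y^{\ast},y)\rangle-\eta$ for all $(w,w^{\ast})$ when $g(z)<\infty$, and $\emptyset$ otherwise. For such $g$, $\breve{T}_g(\epsilon,x):=\{x^{\ast}:(x^{\ast},x)\in\partial_{2\epsilon}g(x,x^{\ast})\}$.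 *)

theory Defs
  imports "HOL-Analysis.Analysis"
begin

(* The dual space X* of a real Banach space X is modelled as the space of bounded
   linear functionals (blinfun into real); the pairing is evaluation. *)

definition reflexive_space :: "'a::banach itself \<Rightarrow> bool" where
  "reflexive_space TYPE('a) \<longleftrightarrow>
     (\<forall>\<Phi> :: ('a \<Rightarrow>\<^sub>L real) \<Rightarrow>\<^sub>L real. \<exists>x::'a. \<forall>xs. blinfun_apply \<Phi> xs = blinfun_apply xs x)"

definition proper_fun :: "('a \<Rightarrow> ereal) \<Rightarrow> bool" where
  "proper_fun f \<longleftrightarrow> (\<forall>x. f x \<noteq> -\<infinity>) \<and> (\<exists>x. f x < \<infinity>)"

definition convex_fun :: "('a::real_vector \<Rightarrow> ereal) \<Rightarrow> bool" where
  "convex_fun f \<longleftrightarrow> (\<forall>x y u. 0 < u \<and> u < 1 \<longrightarrow>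
       f (u *\<^sub>R x + (1 - u) *\<^sub>R y) \<le> ereal u * f x + ereal (1 - u) * f y)"

definition lsc_fun :: "('a::topological_space \<Rightarrow> ereal) \<Rightarrow> bool" where
  "lsc_fun f \<longleftrightarrow> (\<forall>c::real. closed {x. f x \<le> ereal c})"

definition conjugate :: "('a::real_normed_vector \<Rightarrow> ereal) \<Rightarrow> ('a \<Rightarrow>\<^sub>L real) \<Rightarrow> ereal" where
  "conjugate f xs = (SUP x. ereal (blinfun_apply xs x) - f x)"

definition eps_subdiff :: "('a::real_normed_vector \<Rightarrow> ereal) \<Rightarrow> real \<Rightarrow> 'a \<Rightarrow> ('a \<Rightarrow>\<^sub>L real) set" where
  "eps_subdiff f \<epsilon> x = (if f x < \<infinity> then
      {xs. \<forall>y. f y - f x \<ge> ereal (blinfun_apply xs (y - x)) - ereal \<epsilon>} else {})"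

(* eps-subdifferential of g on X x X*, with the dual of X x X* identified with X* x X via
   pairing of (x,xs) with (ys,y) given by ys(x) + xs(y). *)
definition eps_subdiff_pair ::
  "('a::real_normed_vector \<times> ('a \<Rightarrow>\<^sub>L real) \<Rightarrow> ereal) \<Rightarrow> real \<Rightarrow> 'a \<times> ('a \<Rightarrow>\<^sub>L real)
     \<Rightarrow> (('a \<Rightarrow>\<^sub>L real) \<times> 'a) set" where
  "eps_subdiff_pair g \<eta> z = (if g z < \<infinity> then
      {(ys, y). \<forall>w ws. g (w, ws) \<ge> g z + ereal (blinfun_apply ys (w - fst z)
                  + blinfun_apply (ws - snd z) y) - ereal \<eta>} else {})"

definition T_breve ::
  "('a::real_normed_vector \<times> ('a \<Rightarrow>\<^sub>L real) \<Rightarrow> ereal) \<Rightarrow> real \<Rightarrow> 'a \<Rightarrow> ('a \<Rightarrow>\<^sub>L real) set" where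
  "T_breve g \<epsilon> x = {xs. (xs, x) \<in> eps_subdiff_pair g (2 * \<epsilon>) (x, xs)}"

definition fitzpatrick_FY ::
  "('a::real_normed_vector \<Rightarrow> ereal) \<Rightarrow> 'a \<times> ('a \<Rightarrow>\<^sub>L real) \<Rightarrow> ereal" where
  "fitzpatrick_FY f = (\<lambda>(x, xs). f x + conjugate f xs)"

end

theory Submission
  imports Defs
begin


definition goodG :: "('b::real_vector \<Rightarrow> real) \<Rightarrow> ('b \<times> real) set \<Rightarrow> bool" where
  "goodG p G \<longleftrightarrow> (\<forall>x a b. (x,a)\<in>G \<longrightarrow> (x,b)\<in>G \<longrightarrow> a=b) \<and>
     (\<forall>x a y b. (x,a)\<in>G \<longrightarrow> (y,b)\<in>G \<longrightarrow> (x+y,a+b)\<in>G) \<and>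
     (\<forall>x a c. (x,a)\<in>G \<longrightarrow> (c *\<^sub>R x, c*a)\<in>G) \<and>
     (\<forall>x a. (x,a)\<in>G \<longrightarrow> a \<le> p x) \<and> (0,0) \<in> G"

lemma goodG_fn: "goodG p G \<Longrightarrow> (x,a)\<in>G \<Longrightarrow> (x,b)\<in>G \<Longrightarrow> a = b"
  unfolding goodG_def by blast
lemma goodG_add: "goodG p G \<Longrightarrow> (x,a)\<in>G \<Longrightarrow> (y,b)\<in>G \<Longrightarrow> (x+y,a+b)\<in>G"
  unfolding goodG_def by blast
lemma goodG_scl: "goodG p G \<Longrightarrow> (x,a)\<in>G \<Longrightarrow> (c *\<^sub>R x, c*a)\<in>G"
  unfolding goodG_def by blast
lemma goodG_dom: "goodG p G \<Longrightarrow> (x,a)\<in>G \<Longrightarrow> a \<le> p x"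
  unfolding goodG_def by blast
lemma goodG_0: "goodG p G \<Longrightarrow> (0,0)\<in>G"
  unfolding goodG_def by blast

lemma goodG_chain:
  assumes C: "C \<noteq> {}" "\<forall>G\<in>C. goodG p G" "\<forall>A\<in>C. \<forall>B\<in>C. A \<subseteq> B \<or> B \<subseteq> A"
  shows "goodG p (\<Union>C)"
proof -
  have two: "\<exists>G\<in>C. (x,a)\<in>G \<and> (y,b)\<in>G" if "(x,a)\<in>\<Union>C" "(y,b)\<in>\<Union>C" for x a y b
  proof -
    from that(1) obtain A where "A\<in>C" "(x,a)\<in>A" by blast
    moreover from that(2) obtain B where "B\<in>C" "(y,b)\<in>B" by blast
    ultimately show ?thesis using C(3) by (metis subsetD)
  qed
  show ?thesis unfolding goodG_def
  proof (intro conjI allI impI)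
    fix x a b assume "(x,a)\<in>\<Union>C" "(x,b)\<in>\<Union>C"
    then obtain G where "G\<in>C" "(x,a)\<in>G" "(x,b)\<in>G" using two by meson
    then show "a = b" using C(2) goodG_fn by metis
  next
    fix x a y b assume "(x,a)\<in>\<Union>C" "(y,b)\<in>\<Union>C"
    then obtain G where "G\<in>C" "(x,a)\<in>G" "(y,b)\<in>G" using two by meson
    then show "(x+y,a+b)\<in>\<Union>C" using C(2) goodG_add by (metis UnionI)
  next
    fix x a c assume "(x,a)\<in>\<Union>C"
    then obtain G where "G\<in>C" "(x,a)\<in>G" by blast
    then show "(c *\<^sub>R x, c*a)\<in>\<Union>C" using C(2) goodG_scl by (metis UnionI)
  next
    fix x a assume "(x,a)\<in>\<Union>C"
    then obtain G where "G\<in>C" "(x,a)\<in>G" by blast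
    then show "a \<le> p x" using C(2) goodG_dom by metis
  next
    obtain G where "G\<in>C" using C(1) by blast
    then show "(0,0)\<in>\<Union>C" using C(2) goodG_0 by (metis UnionI)
  qed
qed

definition sublin :: "('b::real_vector \<Rightarrow> real) \<Rightarrow> bool" where
  "sublin p \<longleftrightarrow> (\<forall>x y. p (x+y) \<le> p x + p y) \<and> (\<forall>x c. c > 0 \<longrightarrow> p (c *\<^sub>R x) = c * p x)"

lemma goodG_extend:
  assumes sp: "sublin p" and g: "goodG p M" and x0: "\<forall>a. (x0,a) \<notin> M"
  shows "\<exists>M'. goodG p M' \<and> M \<subseteq> M' \<and> M' \<noteq> M"
proof -
  have add: "(x+y,a+b)\<in>M" if "(x,a)\<in>M" "(y,b)\<in>M" for x a y b using g that by (rule goodG_add)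
  have scl: "(c *\<^sub>R x, c*a)\<in>M" if "(x,a)\<in>M" for x a c using g that by (rule goodG_scl)
  have fn: "a = b" if "(x,a)\<in>M" "(x,b)\<in>M" for x a b using g that by (rule goodG_fn)
  have dom: "a \<le> p x" if "(x,a)\<in>M" for x a using g that by (rule goodG_dom)
  have z: "(0,0)\<in>M" using g goodG_0 by metis
  have subad: "p (x+y) \<le> p x + p y" for x y using sp unfolding sublin_def by blast
  have hom: "p (c *\<^sub>R x) = c * p x" if "c > 0" for c x using sp that unfolding sublin_def by blast
  define S where "S = {b - p (y - x0) | y b. (y,b)\<in>M}"
  define c where "c = Sup S"
  have Sne: "S \<noteq> {}" using z unfolding S_def by blast
  have Sbdd: "bdd_above S" unfolding S_def bdd_above_def
  proof (intro exI[of _ "p x0"] allI impI ballI)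
    fix s assume "s \<in> {b - p (y - x0) | y b. (y,b)\<in>M}"
    then obtain y b where s: "s = b - p (y - x0)" "(y,b)\<in>M" by blast
    have "b \<le> p y" using dom s(2) .
    also have "p y \<le> p (y - x0) + p x0" using subad[of "y - x0" x0] by simp
    finally show "s \<le> p x0" using s(1) by simp
  qed
  define M' where "M' = {(y + t *\<^sub>R x0, b + t*c) | y b t. (y,b)\<in>M}"
  have uniq: "t = t'" if "y + t *\<^sub>R x0 = y' + t' *\<^sub>R x0" "(y,b)\<in>M" "(y',b')\<in>M" for y y' b b' t t'
  proof (rule ccontr)
    assume ne: "t \<noteq> t'"
    have "(y' + (-1) *\<^sub>R y, b' + (-1)*b) \<in> M" using add scl that(2,3) by blast
    then have "((1/(t - t')) *\<^sub>R (y' + (-1) *\<^sub>R y), (1/(t-t')) * (b' + (-1)*b)) \<in> M" using scl by blast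
    moreover have "(1/(t - t')) *\<^sub>R (y' + (-1) *\<^sub>R y) = x0"
    proof -
      have h: "y' + (-1) *\<^sub>R y = (t - t') *\<^sub>R x0"
      proof -
        have "y' + (-1) *\<^sub>R y = y' - y" by simp
        also have "\<dots> = t *\<^sub>R x0 - t' *\<^sub>R x0" using that(1) by (metis add_diff_cancel_left' diff_add_eq_diff_diff_swap diff_diff_eq2)
        finally show ?thesis by (simp add: scaleR_diff_left)
      qed
      have "(1/(t - t')) *\<^sub>R (y' + (-1) *\<^sub>R y) = (1/(t - t')) *\<^sub>R ((t - t') *\<^sub>R x0)" by (simp only: h)
      also have "\<dots> = x0" using ne by simp
      finally show ?thesis .
    qed
    ultimately show False using x0 by auto
  qed
  have domM': "b + t*c \<le> p (y + t *\<^sub>R x0)" if "(y,b)\<in>M" for y b t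
  proof (cases "t > 0")
    case True
    have "c \<le> (p (y + t *\<^sub>R x0) - b)/t" unfolding c_def
    proof (rule cSup_least[OF Sne])
      fix s assume "s \<in> S"
      then obtain y' b' where s: "s = b' - p (y' - x0)" "(y',b')\<in>M" unfolding S_def by blast
      have m: "((1/t) *\<^sub>R y, (1/t)*b) \<in> M" using scl that by blast
      have "b' + (1/t)*b \<le> p (y' + (1/t) *\<^sub>R y)" using dom add[OF s(2) m] by blast
      also have "\<dots> \<le> p (y' - x0) + p ((1/t) *\<^sub>R y + x0)" using subad[of "y' - x0" "(1/t) *\<^sub>R y + x0"] by (simp add: algebra_simps)
      also have "p ((1/t) *\<^sub>R y + x0) = (1/t) * p (y + t *\<^sub>R x0)"
      proof -
        have "(1/t) *\<^sub>R y + x0 = (1/t) *\<^sub>R (y + t *\<^sub>R x0)" using True by (simp add: algebra_simps)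
        then show ?thesis using hom[of "1/t"] True by simp
      qed
      finally have "b' - p (y' - x0) \<le> (1/t) * p (y + t *\<^sub>R x0) - (1/t)*b" by simp
      then show "s \<le> (p (y + t *\<^sub>R x0) - b)/t" using s(1) by (simp add: diff_divide_distrib)
    qed
    then show ?thesis using True by (simp add: field_simps)
  next
    case False
    show ?thesis
    proof (cases "t = 0")
      case True then show ?thesis using dom that by simp
    next
      case False2: False
      define s where "s = -t"
      have s0: "s > 0" using False False2 s_def by simp
      have m: "((1/s) *\<^sub>R y, (1/s)*b) \<in> M" using scl that by blast
      have "(1/s)*b - p ((1/s) *\<^sub>R y - x0) \<in> S" unfolding S_def using m by blast
      then have "(1/s)*b - p ((1/s) *\<^sub>R y - x0) \<le> c" unfolding c_def using cSup_upper Sbdd by blast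
      moreover have "p ((1/s) *\<^sub>R y - x0) = (1/s) * p (y + t *\<^sub>R x0)"
      proof -
        have "(1/s) *\<^sub>R y - x0 = (1/s) *\<^sub>R (y + t *\<^sub>R x0)" using s0 s_def by (simp add: algebra_simps)
        then show ?thesis using hom[of "1/s"] s0 by simp
      qed
      ultimately have "(1/s)*b - (1/s) * p (y + t *\<^sub>R x0) \<le> c" by simp
      then have "b - p (y + t *\<^sub>R x0) \<le> s * c" using s0 by (simp add: field_simps)
      then show ?thesis using s_def by simp
    qed
  qed
  have gM': "goodG p M'" unfolding goodG_def
  proof (intro conjI allI impI)
    fix x a b assume "(x,a)\<in>M'" "(x,b)\<in>M'"
    then obtain y1 b1 t1 y2 b2 t2 where e: "x = y1 + t1 *\<^sub>R x0" "a = b1 + t1*c" "(y1,b1)\<in>M"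
       "x = y2 + t2 *\<^sub>R x0" "b = b2 + t2*c" "(y2,b2)\<in>M" unfolding M'_def by blast
    have "t1 = t2" using uniq[of y1 t1 y2 t2] e by metis
    then have "y1 = y2" using e by simp
    then have "b1 = b2" using fn e by blast
    then show "a = b" using e \<open>t1 = t2\<close> by simp
  next
    fix x a y b assume "(x,a)\<in>M'" "(y,b)\<in>M'"
    then obtain y1 b1 t1 y2 b2 t2 where e: "x = y1 + t1 *\<^sub>R x0" "a = b1 + t1*c" "(y1,b1)\<in>M"
       "y = y2 + t2 *\<^sub>R x0" "b = b2 + t2*c" "(y2,b2)\<in>M" unfolding M'_def by blast
    have "(y1+y2, b1+b2)\<in>M" using add e by blast
    moreover have "x + y = (y1+y2) + (t1+t2) *\<^sub>R x0" "a + b = (b1+b2) + (t1+t2)*c" using e by (simp_all add: algebra_simps)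
    ultimately show "(x+y,a+b)\<in>M'" unfolding M'_def by blast
  next
    fix x a d assume "(x,a)\<in>M'"
    then obtain y1 b1 t1 where e: "x = y1 + t1 *\<^sub>R x0" "a = b1 + t1*c" "(y1,b1)\<in>M" unfolding M'_def by blast
    have "(d *\<^sub>R y1, d*b1)\<in>M" using scl e by blast
    moreover have "d *\<^sub>R x = d *\<^sub>R y1 + (d*t1) *\<^sub>R x0" "d*a = d*b1 + (d*t1)*c" using e by (simp_all add: algebra_simps)
    ultimately show "(d *\<^sub>R x, d*a)\<in>M'" unfolding M'_def by blast
  next
    fix x a assume "(x,a)\<in>M'"
    then obtain y1 b1 t1 where e: "x = y1 + t1 *\<^sub>R x0" "a = b1 + t1*c" "(y1,b1)\<in>M" unfolding M'_def by blast
    then show "a \<le> p x" using domM' by simp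
  next
    have "(0 + 0 *\<^sub>R x0, 0 + 0*c) \<in> M'" unfolding M'_def using z by blast
    then show "(0,0)\<in>M'" by simp
  qed
  have sub: "M \<subseteq> M'"
  proof
    fix z assume "z \<in> M"
    then obtain y b where "z = (y,b)" "(y,b)\<in>M" by (cases z) auto
    moreover have "(y + 0 *\<^sub>R x0, b + 0*c) \<in> M'" unfolding M'_def using calculation(2) by blast
    ultimately show "z \<in> M'" by simp
  qed
  have xc: "(x0, c) \<in> M'"
  proof -
    have "(0 + 1 *\<^sub>R x0, 0 + 1*c) \<in> M'" unfolding M'_def using z by blast
    then show ?thesis by simp
  qed
  have "M' \<noteq> M" proof assume "M' = M" then show False using xc x0 by simp qed
  with gM' sub show ?thesis by (intro exI[of _ M'] conjI)
qed

lemma hahn_banach: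
  fixes p :: "'b::real_vector \<Rightarrow> real"
  assumes sp: "sublin p"
  shows "\<exists>l. linear l \<and> (\<forall>v. l v \<le> p v) \<and> l x0 = p x0"
proof -
  have subad: "p (x+y) \<le> p x + p y" for x y using sp unfolding sublin_def by blast
  have hom: "p (c *\<^sub>R x) = c * p x" if "c > 0" for c x using sp that unfolding sublin_def by blast
  have p0: "p 0 = 0" using hom[of 2 0] by simp
  have neg: "- p x \<le> p (-x)" for x using subad[of x "-x"] p0 by simp
  define G0 where "G0 = {(t *\<^sub>R x0, t * p x0) | t. True}"
  have g0: "goodG p G0"
  proof (cases "x0 = 0")
    case True
    then have "G0 = {(0,0)}" unfolding G0_def using p0 by auto
    then show ?thesis unfolding goodG_def using p0 by auto
  next
    case False
    show ?thesis unfolding goodG_def G0_def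
    proof (intro conjI allI impI)
      fix x a b assume "(x,a)\<in>{(t *\<^sub>R x0, t * p x0) | t. True}" "(x,b)\<in>{(t *\<^sub>R x0, t * p x0) | t. True}"
      then obtain t1 t2 where "x = t1 *\<^sub>R x0" "a = t1 * p x0" "x = t2 *\<^sub>R x0" "b = t2 * p x0" by blast
      then have "t1 = t2" using False by (metis scaleR_cancel_right)
      then show "a = b" using \<open>a = _\<close> \<open>b = _\<close> by simp
    next
      fix x a y b assume "(x,a)\<in>{(t *\<^sub>R x0, t * p x0) | t. True}" "(y,b)\<in>{(t *\<^sub>R x0, t * p x0) | t. True}"
      then obtain t1 t2 where "x = t1 *\<^sub>R x0" "a = t1 * p x0" "y = t2 *\<^sub>R x0" "b = t2 * p x0" by blast
      then have "x + y = (t1+t2) *\<^sub>R x0" "a + b = (t1+t2) * p x0" by (simp_all add: algebra_simps)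
      then show "(x+y,a+b)\<in>{(t *\<^sub>R x0, t * p x0) | t. True}" by blast
    next
      fix x a c assume "(x,a)\<in>{(t *\<^sub>R x0, t * p x0) | t. True}"
      then obtain t1 where "x = t1 *\<^sub>R x0" "a = t1 * p x0" by blast
      then have "c *\<^sub>R x = (c*t1) *\<^sub>R x0" "c * a = (c*t1) * p x0" by simp_all
      then show "(c *\<^sub>R x, c*a)\<in>{(t *\<^sub>R x0, t * p x0) | t. True}" by blast
    next
      fix x a assume "(x,a)\<in>{(t *\<^sub>R x0, t * p x0) | t. True}"
      then obtain t where e: "x = t *\<^sub>R x0" "a = t * p x0" by blast
      show "a \<le> p x"
      proof (cases "t > 0")
        case True then show ?thesis using e hom by simp
      next
        case False
        show ?thesis
        proof (cases "t = 0")
          case True then show ?thesis using e p0 by simp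
        next
          case False2: False
          have tn: "-t > 0" using False False2 by simp
          have "p x = p ((-t) *\<^sub>R (-x0))" using e by simp
          also have "\<dots> = (-t) * p (-x0)" by (rule hom[OF tn])
          finally have "p x = (-t) * p (-x0)" .
          moreover have "(-t) * (- p x0) \<le> (-t) * p (-x0)" using neg[of x0] tn by (intro mult_left_mono) auto
          ultimately show ?thesis using e by simp
        qed
      qed
    next
      have "(0 *\<^sub>R x0, 0 * p x0) \<in> {(t *\<^sub>R x0, t * p x0) | t. True}" by blast
      then show "(0,0) \<in> {(t *\<^sub>R x0, t * p x0) | t. True}" by simp
    qed
  qed
  define A where "A = {G. goodG p G \<and> G0 \<subseteq> G}"
  have "\<exists>M\<in>A. \<forall>X\<in>A. M \<subseteq> X \<longrightarrow> X = M"
  proof (rule Zorn_Lemma2, intro ballI)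
    fix C assume C: "C \<in> chains A"
    show "\<exists>U\<in>A. \<forall>X\<in>C. X \<subseteq> U"
    proof (cases "C = {}")
      case True then show ?thesis using g0 unfolding A_def by auto
    next
      case False
      have "goodG p (\<Union>C)" using goodG_chain[OF False] C unfolding chains_def chain_subset_def A_def by blast
      moreover have "G0 \<subseteq> \<Union>C" using False C unfolding chains_def A_def by blast
      ultimately show ?thesis unfolding A_def by blast
    qed
  qed
  then obtain M where MA: "M \<in> A" and mx: "\<forall>X\<in>A. M \<subseteq> X \<longrightarrow> X = M" by (elim bexE)
  have M: "goodG p M" "G0 \<subseteq> M" using MA unfolding A_def by simp_all
  have max: "X = M" if "goodG p X" "G0 \<subseteq> X" "M \<subseteq> X" for X
    using mx that unfolding A_def by simp
  have tot: "\<exists>a. (x,a)\<in>M" for x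
  proof (rule ccontr)
    assume "\<not> ?thesis"
    then obtain M' where "goodG p M'" "M \<subseteq> M'" "M' \<noteq> M" using goodG_extend[OF sp M(1)] by blast
    then show False using max M(2) by blast
  qed
  define l where "l x = (THE a. (x,a)\<in>M)" for x
  have lM: "(x, l x) \<in> M" for x
  proof -
    obtain a where a: "(x,a)\<in>M" using tot by blast
    have "l x = a" unfolding l_def
      using the_equality[of "\<lambda>a. (x,a)\<in>M" a] a goodG_fn[OF M(1)] by metis
    then show ?thesis using a by simp
  qed
  have lval: "l x = a" if "(x,a)\<in>M" for x a
    using M(1) lM[of x] that goodG_fn by metis
  have "linear l"
  proof (rule linearI)
    fix x y show "l (x+y) = l x + l y"
      using goodG_add[OF M(1) lM[of x] lM[of y]] lval by metis
  next
    fix c x show "l (c *\<^sub>R x) = c *\<^sub>R l x"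
      using goodG_scl[OF M(1) lM[of x]] lval by simp
  qed
  moreover have "l v \<le> p v" for v using M(1) lM[of v] goodG_dom by metis
  moreover have "l x0 = p x0"
  proof -
    have "(1 *\<^sub>R x0, 1 * p x0) \<in> M" using M(2) unfolding G0_def by blast
    then show ?thesis using lval by simp
  qed
  ultimately show ?thesis by blast
qed



definition gaugeS :: "'b::real_normed_vector set \<Rightarrow> 'b \<Rightarrow> real set" where
  "gaugeS V v = {lam. lam > 0 \<and> (1/lam) *\<^sub>R v \<in> V}"

definition gaugeF :: "'b::real_normed_vector set \<Rightarrow> 'b \<Rightarrow> real" where
  "gaugeF V v = Inf (gaugeS V v)"

locale gauge_loc =
  fixes V :: "'b::real_normed_vector set" and \<rho> :: real
  assumes cvx: "\<And>u w t. u \<in> V \<Longrightarrow> w \<in> V \<Longrightarrow> 0 \<le> t \<Longrightarrow> t \<le> 1 \<Longrightarrow> t *\<^sub>R u + (1-t) *\<^sub>R w \<in> V"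
    and rho: "\<rho> > 0"
    and ball: "\<And>v. norm v < \<rho> \<Longrightarrow> v \<in> V"
begin

lemma in_S: "lam > norm v / \<rho> \<Longrightarrow> lam \<in> gaugeS V v"
proof -
  assume l: "lam > norm v / \<rho>"
  have lp: "lam > 0" using l rho by (smt (verit) divide_nonneg_pos norm_ge_zero)
  have "norm v < lam * \<rho>" using l rho by (simp add: divide_less_eq mult.commute)
  then have "norm ((1/lam) *\<^sub>R v) < \<rho>" using lp by (simp add: field_simps)
  then show ?thesis unfolding gaugeS_def using lp ball by simp
qed

lemma S_ne: "gaugeS V v \<noteq> {}" using in_S[where lam="norm v / \<rho> + 1" and v=v] by auto

lemma S_bdd: "bdd_below (gaugeS V v)" unfolding gaugeS_def bdd_below_def
  by (rule exI[of _ 0]) auto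

lemma g_nonneg: "gaugeF V v \<ge> 0"
  unfolding gaugeF_def by (rule cInf_greatest[OF S_ne]) (auto simp: gaugeS_def)

lemma g_bound: "gaugeF V v \<le> norm v / \<rho>"
proof (rule field_le_epsilon)
  fix e :: real assume "e > 0"
  then have "norm v / \<rho> + e \<in> gaugeS V v" by (intro in_S) simp
  then show "gaugeF V v \<le> norm v / \<rho> + e" unfolding gaugeF_def by (rule cInf_lower[OF _ S_bdd])
qed

lemma g_hom_le: "c > 0 \<Longrightarrow> gaugeF V (c *\<^sub>R v) \<le> c * gaugeF V v"
proof -
  assume c: "c > 0"
  have "gaugeF V (c *\<^sub>R v) / c \<le> gaugeF V v" unfolding gaugeF_def[of V v]
  proof (rule cInf_greatest[OF S_ne])
    fix lam assume "lam \<in> gaugeS V v"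
    then have l: "lam > 0" "(1/lam) *\<^sub>R v \<in> V" unfolding gaugeS_def by auto
    have "(1/(c*lam)) *\<^sub>R (c *\<^sub>R v) = (1/lam) *\<^sub>R v" using c by simp
    then have "c * lam \<in> gaugeS V (c *\<^sub>R v)" unfolding gaugeS_def using l c by simp
    then have "gaugeF V (c *\<^sub>R v) \<le> c * lam" unfolding gaugeF_def by (rule cInf_lower[OF _ S_bdd])
    then show "gaugeF V (c *\<^sub>R v) / c \<le> lam" using c by (simp add: divide_le_eq mult.commute)
  qed
  then show ?thesis using c by (simp add: divide_le_eq mult.commute)
qed

lemma g_hom: "c > 0 \<Longrightarrow> gaugeF V (c *\<^sub>R v) = c * gaugeF V v"
proof -
  assume c: "c > 0"
  have "gaugeF V v = gaugeF V ((1/c) *\<^sub>R (c *\<^sub>R v))" using c by simp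
  also have "\<dots> \<le> (1/c) * gaugeF V (c *\<^sub>R v)" using c by (intro g_hom_le) simp
  finally have "c * gaugeF V v \<le> gaugeF V (c *\<^sub>R v)" using c by (simp add: field_simps)
  then show ?thesis using g_hom_le[OF c, of v] by simp
qed

lemma g_subadd: "gaugeF V (u + v) \<le> gaugeF V u + gaugeF V v"
proof -
  have key: "gaugeF V (u + v) \<le> lam + mu" if "lam \<in> gaugeS V u" "mu \<in> gaugeS V v" for lam mu
  proof -
    have l: "lam > 0" "(1/lam) *\<^sub>R u \<in> V" "mu > 0" "(1/mu) *\<^sub>R v \<in> V" using that unfolding gaugeS_def by auto
    define t where "t = lam / (lam + mu)"
    have t: "0 \<le> t" "t \<le> 1" using l unfolding t_def by auto
    have "t *\<^sub>R ((1/lam) *\<^sub>R u) + (1-t) *\<^sub>R ((1/mu) *\<^sub>R v) \<in> V" using cvx[OF l(2) l(4) t] .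
    moreover have "t *\<^sub>R ((1/lam) *\<^sub>R u) + (1-t) *\<^sub>R ((1/mu) *\<^sub>R v) = (1/(lam+mu)) *\<^sub>R (u + v)"
    proof -
      have a: "t * (1/lam) = 1/(lam+mu)" using l unfolding t_def by simp
      have b: "(1 - t) * (1/mu) = 1/(lam+mu)" using l unfolding t_def by (simp add: field_simps)
      show ?thesis using a b by (simp add: scaleR_add_right)
    qed
    ultimately have "(1/(lam+mu)) *\<^sub>R (u + v) \<in> V" by simp
    then have "lam + mu \<in> gaugeS V (u+v)" unfolding gaugeS_def using l by simp
    then show ?thesis unfolding gaugeF_def by (rule cInf_lower[OF _ S_bdd])
  qed
  have "gaugeF V (u + v) - gaugeF V v \<le> gaugeF V u" unfolding gaugeF_def[of V u]
  proof (rule cInf_greatest[OF S_ne])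
    fix lam assume lS: "lam \<in> gaugeS V u"
    have "gaugeF V (u + v) - lam \<le> gaugeF V v" unfolding gaugeF_def[of V v]
    proof (rule cInf_greatest[OF S_ne])
      fix mu assume "mu \<in> gaugeS V v"
      then show "gaugeF V (u + v) - lam \<le> mu" using key[OF lS] by smt
    qed
    then show "gaugeF V (u + v) - gaugeF V v \<le> lam" by simp
  qed
  then show ?thesis by simp
qed

lemma g_le1: "v \<in> V \<Longrightarrow> gaugeF V v \<le> 1"
proof -
  assume "v \<in> V"
  then have "1 \<in> gaugeS V v" unfolding gaugeS_def by simp
  then show ?thesis unfolding gaugeF_def by (rule cInf_lower[OF _ S_bdd])
qed

lemma zero_in: "0 \<in> V" using ball rho by simp

lemma g_lt1: "gaugeF V v < 1 \<Longrightarrow> v \<in> V"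
proof -
  assume "gaugeF V v < 1"
  then obtain lam where l: "lam \<in> gaugeS V v" "lam < 1" using cInf_lessD[OF S_ne] unfolding gaugeF_def by blast
  then have l2: "lam > 0" "(1/lam) *\<^sub>R v \<in> V" unfolding gaugeS_def by auto
  have "lam *\<^sub>R ((1/lam) *\<^sub>R v) + (1 - lam) *\<^sub>R 0 \<in> V" using cvx[OF l2(2) zero_in, of lam] l2 l by simp
  then show ?thesis using l2 by simp
qed

lemma g_sublin: "sublin (gaugeF V)"
  unfolding sublin_def using g_subadd g_hom by blast

end


lemma affine_minorant:
  fixes f :: "'a::real_normed_vector \<Rightarrow> ereal" and x :: 'a
  assumes lsc: "lsc_fun f" and cv: "convex_fun f" and nm: "\<forall>w. f w \<noteq> -\<infinity>"
    and fx: "f x = ereal a0" and d: "\<delta> > 0"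
  shows "\<exists>ws. \<forall>w. f w \<ge> ereal (a0 - \<delta> + blinfun_apply ws (w - x))"
proof -
  define a' where "a' = a0 - \<delta>/2"
  have "closed {w. f w \<le> ereal a'}" using lsc unfolding lsc_fun_def by blast
  then have "open (- {w. f w \<le> ereal a'})" by (simp add: open_Compl)
  moreover have "x \<in> - {w. f w \<le> ereal a'}" using fx d unfolding a'_def by simp
  ultimately obtain r where r: "r > 0" "ball x r \<subseteq> - {w. f w \<le> ereal a'}"
    unfolding open_contains_ball by blast
  have near: "f w > ereal a'" if "dist w x < r" for w
  proof -
    have "w \<in> ball x r" using that by (simp add: dist_commute)
    then have "\<not> f w \<le> ereal a'" using r(2) by blast
    then show ?thesis by simp
  qed
  define V :: "('a \<times> real) set" where
    "V = {(w1 - w2, s1 - s2 + \<delta>) | w1 s1 w2 s2. dist w1 x < r \<and> s1 < a' \<and> f w2 \<le> ereal s2}"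
  define \<rho> where "\<rho> = min r (\<delta>/2)"
  have gl: "gauge_loc V \<rho>"
  proof
    show "\<rho> > 0" using r d unfolding \<rho>_def by simp
  next
    fix v :: "'a \<times> real" assume nv: "norm v < \<rho>"
    obtain vw \<sigma> where v: "v = (vw, \<sigma>)" by (cases v)
    have "norm vw < r" using nv norm_fst_le[of vw \<sigma>] unfolding v \<rho>_def by simp
    then have "dist (x + vw) x < r" by (simp add: dist_norm)
    moreover have "\<bar>\<sigma>\<bar> < \<delta>/2" using nv norm_snd_le[of \<sigma> vw] unfolding v \<rho>_def by simp
    then have "\<sigma> - \<delta> + a0 < a'" unfolding a'_def by simp
    moreover have "f x \<le> ereal a0" using fx by simp
    moreover have "v = ((x + vw) - x, (\<sigma> - \<delta> + a0) - a0 + \<delta>)" using v by simp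
    ultimately show "v \<in> V" unfolding V_def by blast
  next
    fix u w :: "'a \<times> real" and t :: real
    assume u: "u \<in> V" and w: "w \<in> V" and t: "0 \<le> t" "t \<le> 1"
    obtain w1 s1 w2 s2 where U: "u = (w1 - w2, s1 - s2 + \<delta>)" "dist w1 x < r" "s1 < a'" "f w2 \<le> ereal s2"
      using u unfolding V_def by blast
    obtain w1' s1' w2' s2' where W: "w = (w1' - w2', s1' - s2' + \<delta>)" "dist w1' x < r" "s1' < a'" "f w2' \<le> ereal s2'"
      using w unfolding V_def by blast
    define W1 where "W1 = t *\<^sub>R w1 + (1-t) *\<^sub>R w1'"
    define W2 where "W2 = t *\<^sub>R w2 + (1-t) *\<^sub>R w2'"
    define S1 where "S1 = t * s1 + (1-t) * s1'"
    define S2 where "S2 = t * s2 + (1-t) * s2'"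
    have "W1 - x = t *\<^sub>R (w1 - x) + (1-t) *\<^sub>R (w1' - x)" unfolding W1_def by (simp add: algebra_simps)
    then have "norm (W1 - x) \<le> t * norm (w1 - x) + (1-t) * norm (w1' - x)"
      using t by (metis (no_types, lifting) abs_of_nonneg diff_ge_0_iff_ge norm_scaleR norm_triangle_ineq)
    also have "\<dots> < r"
    proof -
      have "t * norm (w1 - x) \<le> t * r" using U(2) t by (intro mult_left_mono) (auto simp: dist_norm)
      moreover have "(1-t) * norm (w1' - x) \<le> (1-t) * r" using W(2) t by (intro mult_left_mono) (auto simp: dist_norm)
      moreover have "t * norm (w1 - x) < t * r \<or> (1-t) * norm (w1' - x) < (1-t) * r"
        using U(2) W(2) t by (cases "t = 0") (auto simp: dist_norm)
      moreover have "t * r + (1-t) * r = r" by (simp add: algebra_simps)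
      ultimately show ?thesis by linarith
    qed
    finally have d1: "dist W1 x < r" by (simp add: dist_norm)
    have s1: "S1 < a'"
    proof -
      have "t * s1 \<le> t * a'" "(1-t) * s1' \<le> (1-t) * a'" using U(3) W(3) t by (auto intro: mult_left_mono)
      moreover have "t * s1 < t * a' \<or> (1-t) * s1' < (1-t) * a'" using U(3) W(3) t by (cases "t = 0") auto
      moreover have "t * a' + (1-t) * a' = a'" by (simp add: algebra_simps)
      ultimately show ?thesis unfolding S1_def by linarith
    qed
    have f2: "f W2 \<le> ereal S2"
    proof (cases "t = 0 \<or> t = 1")
      case True then show ?thesis using U(4) W(4) unfolding W2_def S2_def by auto
    next
      case False
      then have t': "0 < t" "t < 1" using t by auto
      obtain b where b: "f w2 = ereal b" "b \<le> s2" using U(4) nm by (cases "f w2") auto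
      obtain b' where b': "f w2' = ereal b'" "b' \<le> s2'" using W(4) nm by (cases "f w2'") auto
      have "f W2 \<le> ereal t * f w2 + ereal (1 - t) * f w2'" using cv t' unfolding convex_fun_def W2_def by blast
      also have "\<dots> = ereal (t * b + (1-t) * b')" using b b' by simp
      also have "\<dots> \<le> ereal S2" unfolding S2_def using b(2) b'(2) t' by (simp add: add_mono mult_left_mono)
      finally show ?thesis .
    qed
    have "t *\<^sub>R u + (1-t) *\<^sub>R w = (W1 - W2, S1 - S2 + \<delta>)"
      unfolding U(1) W(1) W1_def W2_def S1_def S2_def by (simp add: algebra_simps)
    then show "t *\<^sub>R u + (1-t) *\<^sub>R w \<in> V" unfolding V_def using d1 s1 f2 by blast
  qed
  interpret gauge_loc V \<rho> by (rule gl)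
  define p where "p = gaugeF V"
  obtain l where l: "linear l" "\<And>v. l v \<le> p v" "l (0, \<delta>) = p (0, \<delta>)"
    using hahn_banach[OF g_sublin, of "(0::'a, \<delta>)"] unfolding p_def by blast
  have notin: "(0::'a, \<delta>) \<notin> V"
  proof
    assume "(0, \<delta>) \<in> V"
    then obtain w1 s1 w2 s2 where e: "(0::'a, \<delta>) = (w1 - w2, s1 - s2 + \<delta>)" "dist w1 x < r" "s1 < a'" "f w2 \<le> ereal s2"
      unfolding V_def by blast
    then have "w1 = w2" "s1 = s2" by auto
    then have "f w1 \<le> ereal a'" using e(3,4) by (meson ereal_less_eq(3) less_imp_le order_trans)
    then show False using near[OF e(2)] by simp
  qed
  have p1: "p (0, \<delta>) \<ge> 1" using g_lt1 notin unfolding p_def by force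
  define \<beta> where "\<beta> = l (0, 1)"
  define \<phi> where "\<phi> w = l (w, 0)" for w
  have lpair: "l (w, s) = \<phi> w + s * \<beta>" for w s
  proof -
    have "(w, s) = (w, 0) + s *\<^sub>R (0, 1)" by simp
    then have "l (w, s) = l ((w, 0) + s *\<^sub>R (0, 1))" by (rule arg_cong)
    also have "\<dots> = l (w, 0) + l (s *\<^sub>R (0, 1))" by (rule linear_add[OF l(1)])
    also have "l (s *\<^sub>R (0, 1)) = s * l (0, 1)" using linear_scale[OF l(1), of s "(0,1)"] by simp
    finally show ?thesis unfolding \<phi>_def \<beta>_def by simp
  qed
  have b1: "\<delta> * \<beta> \<ge> 1" using l(3) p1 lpair[of 0 \<delta>] unfolding \<phi>_def
    using linear_0[OF l(1)] by (simp add: mult.commute zero_prod_def)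
  have bpos: "\<beta> > 0" using b1 d by (smt (verit) mult_nonneg_nonpos)
  have \<phi>lin: "linear \<phi>" unfolding \<phi>_def
  proof (rule linearI)
    fix u v :: 'a show "l (u + v, 0) = l (u, 0) + l (v, 0)"
      using linear_add[OF l(1), of "(u,0)" "(v,0)"] by simp
  next
    fix c and u :: 'a show "l (c *\<^sub>R u, 0) = c *\<^sub>R l (u, 0)"
      using linear_scale[OF l(1), of c "(u,0)"] by simp
  qed
  have \<phi>b: "\<phi> w \<le> norm w / \<rho>" for w
  proof -
    have "\<phi> w \<le> p (w, 0)" unfolding \<phi>_def using l(2) .
    also have "\<dots> \<le> norm (w, 0::real) / \<rho>" unfolding p_def by (rule g_bound)
    finally show ?thesis by (simp add: norm_Pair)
  qed
  define ws where "ws = Blinfun (\<lambda>w. - \<phi> w / \<beta>)"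
  have bl: "bounded_linear (\<lambda>w. - \<phi> w / \<beta>)"
  proof (rule bounded_linear_intro[where K = "1 / (\<rho> * \<beta>)"])
    fix u v show "- \<phi> (u + v) / \<beta> = - \<phi> u / \<beta> + - \<phi> v / \<beta>"
      using linear_add[OF \<phi>lin] by (simp add: diff_divide_distrib)
  next
    fix c u show "- \<phi> (c *\<^sub>R u) / \<beta> = c *\<^sub>R (- \<phi> u / \<beta>)"
      using linear_scale[OF \<phi>lin] by simp
  next
    fix u
    have "\<bar>\<phi> u\<bar> \<le> norm u / \<rho>"
      using \<phi>b[of u] \<phi>b[of "-u"] linear_neg[OF \<phi>lin, of u] by simp
    then show "norm (- \<phi> u / \<beta>) \<le> norm u * (1 / (\<rho> * \<beta>))"
      using bpos rho by (simp add: divide_le_eq field_simps abs_div)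
  qed
  have wsa: "blinfun_apply ws w = - \<phi> w / \<beta>" for w
    unfolding ws_def using bounded_linear_Blinfun_apply[OF bl] by simp
  show ?thesis
  proof (intro exI allI)
    fix w
    show "f w \<ge> ereal (a0 - \<delta> + blinfun_apply ws (w - x))"
    proof (cases "f w")
      case (real b)
      have "dist x x < r" "a0 - \<delta> < a'" "f w \<le> ereal b" using real d r(1) unfolding a'_def by auto
      then have "(x - w, (a0 - \<delta>) - b + \<delta>) \<in> V" unfolding V_def by blast
      then have "l (x - w, (a0 - \<delta>) - b + \<delta>) \<le> 1" using l(2) g_le1 unfolding p_def by (meson order_trans)
      then have "\<phi> (x - w) + (a0 - b) * \<beta> \<le> 1" using lpair by simp
      then have "\<phi> (x - w) + (a0 - \<delta> - b) * \<beta> \<le> 0" using b1 by (simp add: algebra_simps)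
      then have "\<phi> (x - w) / \<beta> + (a0 - \<delta> - b) \<le> 0" using bpos by (simp add: field_simps)
      moreover have "\<phi> (x - w) = - \<phi> (w - x)" using linear_diff[OF \<phi>lin, of x w] linear_diff[OF \<phi>lin, of w x] by simp
      ultimately have "a0 - \<delta> + (- \<phi> (w - x) / \<beta>) \<le> b" by simp
      then show ?thesis using real wsa by simp
    qed (use nm in auto)
  qed
qed



lemma conj_ge: "ereal (blinfun_apply xs w) - f w \<le> conjugate f xs"
  unfolding conjugate_def by (rule SUP_upper) simp

theorem corollary3p1:
  fixes f :: "'a::banach \<Rightarrow> ereal"
  assumes "reflexive_space TYPE('a)"
    and "lsc_fun f" and "proper_fun f" and "convex_fun f"
    and "\<epsilon> \<ge> 0"
  shows "eps_subdiff f \<epsilon> x = T_breve (fitzpatrick_FY f) \<epsilon> x"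
proof (intro set_eqI iffI)
  have nm: "\<forall>w. f w \<noteq> -\<infinity>" using assms(3) unfolding proper_fun_def by blast
  fix xs
  {
    assume "xs \<in> eps_subdiff f \<epsilon> x"
    then have fxlt: "f x < \<infinity>" and H: "\<And>y. f y - f x \<ge> ereal (blinfun_apply xs (y - x)) - ereal \<epsilon>"
      unfolding eps_subdiff_def by (auto split: if_splits)
    obtain fx where fx: "f x = ereal fx" using fxlt nm by (cases "f x") auto
    have Hr: "b - fx \<ge> blinfun_apply xs y - blinfun_apply xs x - \<epsilon>" if "f y = ereal b" for y b
      using H[of y] that fx by (simp add: blinfun.bilinear_simps)
    have cs_le: "conjugate f xs \<le> ereal (blinfun_apply xs x - fx + \<epsilon>)"
      unfolding conjugate_def
    proof (rule SUP_least)
      fix y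
      show "ereal (blinfun_apply xs y) - f y \<le> ereal (blinfun_apply xs x - fx + \<epsilon>)"
      proof (cases "f y")
        case (real b) then show ?thesis using Hr[OF real] by simp
      qed (use nm in auto)
    qed
    have cs_ge: "conjugate f xs \<ge> ereal (blinfun_apply xs x - fx)" using conj_ge[of xs x f] fx by simp
    obtain cs where cs: "conjugate f xs = ereal cs" "cs \<le> blinfun_apply xs x - fx + \<epsilon>"
      using cs_le cs_ge by (cases "conjugate f xs") auto
    have main: "f w + conjugate f ws \<ge> ereal fx + ereal cs
        + ereal (blinfun_apply xs (w - x) + blinfun_apply (ws - xs) x) - ereal (2 * \<epsilon>)" for w ws
    proof -
      have cw: "conjugate f ws \<ge> ereal (blinfun_apply ws x - fx)" using conj_ge[of ws x f] fx by simp
      show ?thesis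
      proof (cases "f w")
        case (real fw)
        show ?thesis
        proof (cases "conjugate f ws")
          case (real c)
          have "fw - fx \<ge> blinfun_apply xs w - blinfun_apply xs x - \<epsilon>" using Hr[OF \<open>f w = ereal fw\<close>] .
          moreover have "c \<ge> blinfun_apply ws x - fx" using cw real by simp
          ultimately show ?thesis using \<open>f w = ereal fw\<close> real cs(2)
            by (simp add: blinfun.bilinear_simps)
        qed (use cw in auto)
      next
        case PInf
        have "conjugate f ws \<noteq> -\<infinity>" using cw by auto
        then show ?thesis using PInf by simp
      qed (use nm in auto)
    qed
    show "xs \<in> T_breve (fitzpatrick_FY f) \<epsilon> x"
      unfolding T_breve_def eps_subdiff_pair_def fitzpatrick_FY_def
      using main fx cs(1) by simp
  }
  {
    assume "xs \<in> T_breve (fitzpatrick_FY f) \<epsilon> x"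
    then have lt: "f x + conjugate f xs < \<infinity>" and
      H: "\<And>w ws. f w + conjugate f ws \<ge> f x + conjugate f xs
           + ereal (blinfun_apply xs (w - x) + blinfun_apply (ws - xs) x) - ereal (2 * \<epsilon>)"
      unfolding T_breve_def eps_subdiff_pair_def fitzpatrick_FY_def by (auto split: if_splits)
    obtain x0 where x0: "f x0 < \<infinity>" using assms(3) unfolding proper_fun_def by blast
    have "conjugate f xs \<noteq> -\<infinity>"
    proof -
      obtain b where "f x0 = ereal b" using x0 nm by (cases "f x0") auto
      then show ?thesis using conj_ge[of xs x0 f] by auto
    qed
    then obtain fx cs where fx: "f x = ereal fx" and cs: "conjugate f xs = ereal cs"
      using lt nm[rule_format, of x] by (cases "f x"; cases "conjugate f xs") auto
    have key: "fx + cs - blinfun_apply xs x \<le> \<epsilon>"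
    proof (rule field_le_epsilon)
      fix \<delta> :: real assume d: "\<delta> > 0"
      obtain ws where ws: "\<And>w. f w \<ge> ereal (fx - \<delta> + blinfun_apply ws (w - x))"
        using affine_minorant[OF assms(2) assms(4) nm fx d] by blast
      have cwle: "conjugate f ws \<le> ereal (blinfun_apply ws x - fx + \<delta>)"
        unfolding conjugate_def
      proof (rule SUP_least)
        fix w
        show "ereal (blinfun_apply ws w) - f w \<le> ereal (blinfun_apply ws x - fx + \<delta>)"
        proof (cases "f w")
          case (real b) then show ?thesis using ws[of w] by (simp add: blinfun.bilinear_simps)
        qed (use nm in auto)
      qed
      have "ereal (cs - \<delta>) < conjugate f xs" using cs d by simp
      then obtain w where w: "ereal (cs - \<delta>) < ereal (blinfun_apply xs w) - f w"
        unfolding conjugate_def by (subst (asm) less_SUP_iff) (elim bexE, simp)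
      obtain fw where fw: "f w = ereal fw" using w nm by (cases "f w") auto
      have w': "cs - \<delta> < blinfun_apply xs w - fw" using w fw by simp
      have Hw: "f w + conjugate f ws \<ge> ereal fx + ereal cs
           + ereal (blinfun_apply xs (w - x) + blinfun_apply (ws - xs) x) - ereal (2 * \<epsilon>)"
        using H[of w ws] fx cs by simp
      show "fx + cs - blinfun_apply xs x \<le> \<epsilon> + \<delta>"
      proof (cases "conjugate f ws")
        case (real c)
        have "c \<le> blinfun_apply ws x - fx + \<delta>" using cwle real by simp
        moreover have "fx + cs + (blinfun_apply xs w - blinfun_apply xs x + (blinfun_apply ws x - blinfun_apply xs x)) - 2 * \<epsilon> \<le> fw + c"
          using Hw fw real by (simp add: blinfun.bilinear_simps)
        ultimately show ?thesis using w' by simp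
      next
        case MInf then show ?thesis using Hw fw by simp
      next
        case PInf then show ?thesis using cwle by simp
      qed
    qed
    have all: "ereal (blinfun_apply xs (y - x)) - ereal \<epsilon> \<le> f y - ereal fx" for y
    proof (cases "f y")
      case (real b)
      have "blinfun_apply xs y - b \<le> cs" using conj_ge[of xs y f] real cs by simp
      then show ?thesis using real key by (simp add: blinfun.bilinear_simps)
    qed (use nm in auto)
    show "xs \<in> eps_subdiff f \<epsilon> x"
      unfolding eps_subdiff_def using fx all by simp
  }
qed


end
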